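(* Let $0<\epsilon<\epsilon'<1$, $g\in\Lambda^{\epsilon'}_{I}G_{\tau}\subset\Lambda^{\epsilon}_{I}G_{\tau}$ and $h\in\Lambda^{\epsilon}_{E}G_{\tau}\subset\Lambda^{\epsilon'}_{E}G_{\tau}$. Then \[ g\#_{\epsilon'}h=g\#_{\epsilon}h\in\Lambda^{\epsilon}_{E}G_{\tau}. \]
   Context: Setting: $G$ compact semisimple Lie group, complexification $G^{\mathbb C}$, bar = Cartan involution fixing $G$; $\tau$ an automorphism of $G$ of finite order $k\ge2$ with fixed subgroup $K$; $\omega=e^{2\pi i/k}$; $K^{\mathbb C}=KB$ an Iwasawa decomposition, $B$ solvable. For $0<\epsilon<1$: $C^{(\epsilon)}=\{|\lambda|=\epsilon\}\cup\{|\lambda|=1/\epsilon\}$, $I^{(\epsilon)}=\{|\lambda|<\epsilon\}\cup\{|\lambda|>1/\epsilon\}\cup\{\infty\}$, $E^{(\epsilon)}=\{\epsilon<|\lambda|<1/\epsilon\}$. $\Lambda^\epsilon G_\tau$: smooth $g:C^{(\epsilon)}\to G^{\mathbb C}$ with $g(\omega\lambda)=\tau g(\lambda)$, $\overline{g(\lambda)}=g(1/\bar\lambda)$; $\Lambda^\epsilon_EG_\tau$, $\Lambda^\epsilon_IG_\tau$: those extending holomorphically to $E^{(\epsilon)}$, resp. $I^{(\epsilon)}$; $\Lambda^\epsilon_{I,B}G_\tau$: those in $\Lambda^\epsilon_IG_\tau$ with $g(0)\in B$. Every $h\in\Lambda^\epsilon G_\tau$ factors uniquely as $h=h_Eh_I$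 with $h_E\in\Lambda^\epsilon_EG_\tau$, $h_I\in\Lambda^\epsilon_{I,B}G_\tau$; the dressing action is $g\#_\epsilon h=(gh)_E$ for $g\in\Lambda^\epsilon_IG_\tau$, $h\in\Lambda^\epsilon_EG_\tau$. The inclusions $\Lambda^{\epsilon'}_IG_\tau\subset\Lambda^\epsilon_IG_\tau$ and $\Lambda^\epsilon_EG_\tau\subset\Lambda^{\epsilon'}_EG_\tau$ for $\epsilon<\epsilon'$ are given by restricting holomorphic extensions. *)

theory Defs
  imports "HOL-Analysis.Analysis"
begin

type_synonym 'n cmat = "complex^'n^'n"

text \<open>Conjugate transpose, and the Cartan involution bar X = (X^*)^(-1) fixing
  the compact real form G = Gc \<inter> U(n).\<close>
definition ctrans :: "'n::finite cmat \<Rightarrow> 'n cmat" where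
  "ctrans X = (\<chi> i j. cnj (X $ j $ i))"

definition cbar :: "'n::finite cmat \<Rightarrow> 'n cmat" where
  "cbar X = matrix_inv (ctrans X)"

definition is_mgroup :: "'n::finite cmat set \<Rightarrow> bool" where
  "is_mgroup H \<longleftrightarrow> mat 1 \<in> H \<and> (\<forall>X\<in>H. invertible X) \<and>
     (\<forall>X\<in>H. \<forall>Y\<in>H. X ** Y \<in> H) \<and> (\<forall>X\<in>H. matrix_inv X \<in> H)"

definition subgrp_gen :: "'n::finite cmat set \<Rightarrow> 'n cmat set" where
  "subgrp_gen S = \<Inter>{H. mat 1 \<in> H \<and> (\<forall>X\<in>H. \<forall>Y\<in>H. X ** Y \<in> H)
                        \<and> (\<forall>X\<in>H. matrix_inv X \<in> H) \<and> S \<subseteq> H}"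

definition derived :: "'n::finite cmat set \<Rightarrow> 'n cmat set" where
  "derived H = subgrp_gen {X ** Y ** matrix_inv X ** matrix_inv Y | X Y. X \<in> H \<and> Y \<in> H}"

definition solvable_mgroup :: "'n::finite cmat set \<Rightarrow> bool" where
  "solvable_mgroup H \<longleftrightarrow> is_mgroup H \<and> (\<exists>m. (derived ^^ m) H = {mat 1})"

definition realform :: "'n::finite cmat set \<Rightarrow> 'n cmat set" where
  "realform Gc = {X \<in> Gc. cbar X = X}"

definition fixgrp :: "'n::finite cmat set \<Rightarrow> ('n cmat \<Rightarrow> 'n cmat) \<Rightarrow> 'n cmat set" where
  "fixgrp H tau = {X \<in> H. tau X = X}"

text \<open>Standing setting: Gc (= G^C) a closed matrix group stable under conjugate
  transposition; tau a continuous automorphism of Gc of order exactly k \<ge> 2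
  commuting with bar (so it restricts to an automorphism of G); B a solvable
  subgroup of K^C = (Gc)^tau with K^C = K B, K \<inter> B = {1} (Iwasawa decomposition).\<close>
definition twisted_setting ::
  "'n::finite cmat set \<Rightarrow> ('n cmat \<Rightarrow> 'n cmat) \<Rightarrow> nat \<Rightarrow> 'n cmat set \<Rightarrow> bool" where
  "twisted_setting Gc tau k B \<longleftrightarrow>
     is_mgroup Gc \<and> closed Gc \<and> (\<forall>X\<in>Gc. ctrans X \<in> Gc) \<and>
     2 \<le> k \<and>
     bij_betw tau Gc Gc \<and> (\<forall>X\<in>Gc. \<forall>Y\<in>Gc. tau (X ** Y) = tau X ** tau Y) \<and>
     continuous_on Gc tau \<and>
     (\<forall>X\<in>Gc. tau (cbar X) = cbar (tau X)) \<and>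
     (\<forall>X\<in>Gc. (tau ^^ k) X = X) \<and>
     (\<forall>j. 0 < j \<and> j < k \<longrightarrow> (\<exists>X\<in>realform Gc. (tau ^^ j) X \<noteq> X)) \<and>
     solvable_mgroup B \<and> B \<subseteq> fixgrp Gc tau \<and>
     fixgrp Gc tau = {X ** Y | X Y. X \<in> fixgrp (realform Gc) tau \<and> Y \<in> B} \<and>
     fixgrp (realform Gc) tau \<inter> B = {mat 1}"

definition omega :: "nat \<Rightarrow> complex" where
  "omega k = exp (2 * pi * \<i> / of_nat k)"

definition Ccirc :: "real \<Rightarrow> complex set" where
  "Ccirc e = {z. norm z = e} \<union> {z. norm z = 1 / e}"

definition Eann :: "real \<Rightarrow> complex set" where
  "Eann e = {z. e < norm z \<and> norm z < 1 / e}"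

definition Eclos :: "real \<Rightarrow> complex set" where
  "Eclos e = {z. e \<le> norm z \<and> norm z \<le> 1 / e}"

definition smooth_real :: "(real \<Rightarrow> 'a::real_normed_vector) \<Rightarrow> bool" where
  "smooth_real f \<longleftrightarrow> (\<exists>D. D 0 = f \<and> (\<forall>m t. (D m has_vector_derivative D (Suc m) t) (at t)))"

definition smooth_on_circles :: "real \<Rightarrow> (complex \<Rightarrow> 'n::finite cmat) \<Rightarrow> bool" where
  "smooth_on_circles e g \<longleftrightarrow>
     smooth_real (\<lambda>t. g (of_real e * cis t)) \<and> smooth_real (\<lambda>t. g (of_real (1/e) * cis t))"

definition mholo :: "(complex \<Rightarrow> 'n::finite cmat) \<Rightarrow> complex set \<Rightarrow> bool" where
  "mholo F S \<longleftrightarrow> (\<forall>i j. (\<lambda>z. F z $ i $ j) holomorphic_on S)"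

text \<open>A loop is represented by a function on \<complex>; only its values on C^(e) matter.\<close>
definition Lam ::
  "'n::finite cmat set \<Rightarrow> ('n cmat \<Rightarrow> 'n cmat) \<Rightarrow> nat \<Rightarrow> real \<Rightarrow> (complex \<Rightarrow> 'n cmat) set" where
  "Lam Gc tau k e = {g. (\<forall>z\<in>Ccirc e. g z \<in> Gc) \<and> smooth_on_circles e g \<and>
       (\<forall>z\<in>Ccirc e. g (omega k * z) = tau (g z)) \<and>
       (\<forall>z\<in>Ccirc e. cbar (g z) = g (1 / cnj z))}"

definition EExt ::
  "'n::finite cmat set \<Rightarrow> ('n cmat \<Rightarrow> 'n cmat) \<Rightarrow> nat \<Rightarrow> real \<Rightarrow>
     (complex \<Rightarrow> 'n cmat) \<Rightarrow> (complex \<Rightarrow> 'n cmat) \<Rightarrow> bool" where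
  "EExt Gc tau k e g F \<longleftrightarrow>
     mholo F (Eann e) \<and> continuous_on (Eclos e) F \<and> (\<forall>z\<in>Ccirc e. F z = g z) \<and>
     (\<forall>z\<in>Eclos e. F z \<in> Gc) \<and>
     (\<forall>z\<in>Eclos e. F (omega k * z) = tau (F z)) \<and>
     (\<forall>z\<in>Eclos e. cbar (F z) = F (1 / cnj z))"

text \<open>F together with the value Finf at \<infinity> is a holomorphic extension of g to
  I^(e) = {|z|<e} \<union> {|z|>1/e} \<union> {\<infinity>}; holomorphy at \<infinity> is expressed via the
  chart \<mu> \<mapsto> 1/\<mu>.\<close>
definition at_inf_chart :: "(complex \<Rightarrow> 'n::finite cmat) \<Rightarrow> 'n cmat \<Rightarrow> complex \<Rightarrow> 'n cmat" where
  "at_inf_chart F Finf = (\<lambda>\<mu>. if \<mu> = 0 then Finf else F (1 / \<mu>))"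

definition IExt ::
  "'n::finite cmat set \<Rightarrow> ('n cmat \<Rightarrow> 'n cmat) \<Rightarrow> nat \<Rightarrow> real \<Rightarrow>
     (complex \<Rightarrow> 'n cmat) \<Rightarrow> (complex \<Rightarrow> 'n cmat) \<Rightarrow> 'n cmat \<Rightarrow> bool" where
  "IExt Gc tau k e g F Finf \<longleftrightarrow>
     mholo F (ball 0 e) \<and> continuous_on (cball 0 e) F \<and>
     mholo (at_inf_chart F Finf) (ball 0 e) \<and> continuous_on (cball 0 e) (at_inf_chart F Finf) \<and>
     (\<forall>z\<in>Ccirc e. F z = g z) \<and>
     (\<forall>z\<in>cball 0 e. F z \<in> Gc \<and> at_inf_chart F Finf z \<in> Gc) \<and>
     (\<forall>z\<in>cball 0 e. F (omega k * z) = tau (F z) \<and>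
         at_inf_chart F Finf (z / omega k) = tau (at_inf_chart F Finf z)) \<and>
     (\<forall>z\<in>cball 0 e. cbar (F z) = at_inf_chart F Finf (cnj z))"

definition LamE :: "'n::finite cmat set \<Rightarrow> ('n cmat \<Rightarrow> 'n cmat) \<Rightarrow> nat \<Rightarrow> real \<Rightarrow> (complex \<Rightarrow> 'n cmat) set" where
  "LamE Gc tau k e = {g \<in> Lam Gc tau k e. \<exists>F. EExt Gc tau k e g F}"

definition LamI :: "'n::finite cmat set \<Rightarrow> ('n cmat \<Rightarrow> 'n cmat) \<Rightarrow> nat \<Rightarrow> real \<Rightarrow> (complex \<Rightarrow> 'n cmat) set" where
  "LamI Gc tau k e = {g \<in> Lam Gc tau k e. \<exists>F Finf. IExt Gc tau k e g F Finf}"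

definition LamIB ::
  "'n::finite cmat set \<Rightarrow> ('n cmat \<Rightarrow> 'n cmat) \<Rightarrow> nat \<Rightarrow> 'n cmat set \<Rightarrow> real \<Rightarrow> (complex \<Rightarrow> 'n cmat) set" where
  "LamIB Gc tau k B e = {g \<in> Lam Gc tau k e. \<exists>F Finf. IExt Gc tau k e g F Finf \<and> F 0 \<in> B}"

definition unique_factorization ::
  "'n::finite cmat set \<Rightarrow> ('n cmat \<Rightarrow> 'n cmat) \<Rightarrow> nat \<Rightarrow> 'n cmat set \<Rightarrow> bool" where
  "unique_factorization Gc tau k B \<longleftrightarrow>
    (\<forall>e. 0 < e \<and> e < 1 \<longrightarrow>
      (\<forall>h\<in>Lam Gc tau k e.
         (\<exists>hE\<in>LamE Gc tau k e. \<exists>hI\<in>LamIB Gc tau k B e. \<forall>z\<in>Ccirc e. h z = hE z ** hI z) \<and>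
         (\<forall>hE\<in>LamE Gc tau k e. \<forall>hI\<in>LamIB Gc tau k B e.
          \<forall>hE'\<in>LamE Gc tau k e. \<forall>hI'\<in>LamIB Gc tau k B e.
            (\<forall>z\<in>Ccirc e. h z = hE z ** hI z) \<longrightarrow> (\<forall>z\<in>Ccirc e. h z = hE' z ** hI' z) \<longrightarrow>
            (\<forall>z\<in>Ccirc e. hE z = hE' z \<and> hI z = hI' z))))"

text \<open>Dressing action g #_e h = (g h)_E, normalised to 0 off C^(e) so that it is
  a well-defined function.\<close>
definition dress ::
  "'n::finite cmat set \<Rightarrow> ('n cmat \<Rightarrow> 'n cmat) \<Rightarrow> nat \<Rightarrow> 'n cmat set \<Rightarrow> real \<Rightarrow>
     (complex \<Rightarrow> 'n cmat) \<Rightarrow> (complex \<Rightarrow> 'n cmat) \<Rightarrow> (complex \<Rightarrow> 'n cmat)" where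
  "dress Gc tau k B e g h = (THE kE. kE \<in> LamE Gc tau k e \<and> (\<forall>z. z \<notin> Ccirc e \<longrightarrow> kE z = 0) \<and>
       (\<exists>kI\<in>LamIB Gc tau k B e. \<forall>z\<in>Ccirc e. g z ** h z = kE z ** kI z))"

end

theory Submission
  imports Defs "HOL-Complex_Analysis.Complex_Analysis"
begin

lemma smooth_const: "smooth_real (\<lambda>t. c)"
  unfolding smooth_real_def
  by (rule exI[of _ "\<lambda>m. if m = 0 then (\<lambda>t. c) else (\<lambda>t. 0)"]) auto

lemma smooth_add:
  assumes "smooth_real f" "smooth_real g"
  shows "smooth_real (\<lambda>t. f t + g t)"
proof -
  obtain Df where f: "Df 0 = f" "\<And>m t. (Df m has_vector_derivative Df (Suc m) t) (at t)"
    using assms(1) unfolding smooth_real_def by blast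
  obtain Dg where g: "Dg 0 = g" "\<And>m t. (Dg m has_vector_derivative Dg (Suc m) t) (at t)"
    using assms(2) unfolding smooth_real_def by blast
  show ?thesis unfolding smooth_real_def
    by (rule exI[of _ "\<lambda>m t. Df m t + Dg m t"]) (auto simp: f g intro!: has_vector_derivative_add)
qed

lemma smooth_sum:
  assumes "finite I" "\<And>i. i \<in> I \<Longrightarrow> smooth_real (f i)"
  shows "smooth_real (\<lambda>t. \<Sum>i\<in>I. f i t)"
  using assms by (induction I rule: finite_induct) (auto intro: smooth_const smooth_add)

lemma smooth_linear:
  assumes "smooth_real f" "bounded_linear L"
  shows "smooth_real (\<lambda>t. L (f t))"
proof -
  obtain Df where f: "Df 0 = f" "\<And>m t. (Df m has_vector_derivative Df (Suc m) t) (at t)"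
    using assms(1) unfolding smooth_real_def by blast
  show ?thesis unfolding smooth_real_def
    by (rule exI[of _ "\<lambda>m t. L (Df m t)"]) (auto simp: f intro!: bounded_linear.has_vector_derivative[OF assms(2)])
qed

lemma smooth_cnj:
  assumes "smooth_real f"
  shows "smooth_real (\<lambda>t. cnj (f t))"
  using smooth_linear[OF assms bounded_linear_cnj] .

lemma smooth_mult:
  fixes f g :: "real \<Rightarrow> complex"
  assumes "smooth_real f" "smooth_real g"
  shows "smooth_real (\<lambda>t. f t * g t)"
proof -
  obtain Df where f: "Df 0 = f" "\<And>m t. (Df m has_vector_derivative Df (Suc m) t) (at t)"
    using assms(1) unfolding smooth_real_def by blast
  obtain Dg where g: "Dg 0 = g" "\<And>m t. (Dg m has_vector_derivative Dg (Suc m) t) (at t)"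
    using assms(2) unfolding smooth_real_def by blast
  define D where "D m t = (\<Sum>i = 0..m. of_nat (m choose i) * Df i t * Dg (m-i) t)" for m t
  have "(D n has_vector_derivative D (Suc n) t) (at t)" for n t
  proof -
    have sumeq: "(\<Sum>i = 0..n. of_nat (n choose i) * (Df i t * Dg (Suc (n - i)) t + Df (Suc i) t * Dg (n - i) t))
        = D (Suc n) t"
      unfolding D_def
      apply (simp add: Suc_choose algebra_simps sum.distrib)
      apply (subst (4) sum_Suc_reindex)
      apply (auto simp: algebra_simps Suc_diff_le intro!: sum.cong)
      done
    have "(D n has_vector_derivative (\<Sum>i = 0..n. of_nat (n choose i) * (Df i t * Dg (Suc (n - i)) t + Df (Suc i) t * Dg (n - i) t))) (at t)"
      unfolding D_def
      apply (rule has_vector_derivative_sum)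
      apply (simp only: mult.assoc)
      apply (rule has_vector_derivative_mult_right)
      apply (rule has_vector_derivative_mult[OF f(2) g(2)])
      done
    then show ?thesis using sumeq by simp
  qed
  moreover have "D 0 = (\<lambda>t. f t * g t)" by (auto simp: D_def f g)
  ultimately show ?thesis unfolding smooth_real_def by blast
qed

lemma has_vector_derivative_vec:
  fixes f :: "real \<Rightarrow> 'a::real_normed_vector ^ 'n::finite"
  assumes "\<And>i. ((\<lambda>t. f t $ i) has_vector_derivative f' $ i) (at t)"
  shows "(f has_vector_derivative f') (at t)"
proof -
  have "((\<lambda>y. (f y $ i - f t $ i - (y - t) *\<^sub>R f' $ i) /\<^sub>R \<bar>y - t\<bar>) \<longlongrightarrow> 0) (at t)" for i
    using assms[of i] unfolding has_vector_derivative_def has_derivative_at_within by simp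
  then have "((\<lambda>y. \<chi> i. (f y $ i - f t $ i - (y - t) *\<^sub>R f' $ i) /\<^sub>R \<bar>y - t\<bar>) \<longlongrightarrow> (\<chi> i. 0)) (at t)"
    by (intro tendsto_vec_lambda) auto
  moreover have "(\<lambda>y. \<chi> i. (f y $ i - f t $ i - (y - t) *\<^sub>R f' $ i) /\<^sub>R \<bar>y - t\<bar>)
     = (\<lambda>y. (f y - f t - (y - t) *\<^sub>R f') /\<^sub>R \<bar>y - t\<bar>)"
    by (auto simp: vec_eq_iff)
  ultimately show ?thesis
    unfolding has_vector_derivative_def has_derivative_at_within
    by (auto simp: bounded_linear_scaleR_left zero_vec_def)
qed

lemma smooth_vec:
  fixes f :: "real \<Rightarrow> 'a::real_normed_vector ^ 'n::finite"
  assumes "\<And>i. smooth_real (\<lambda>t. f t $ i)"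
  shows "smooth_real f"
proof -
  obtain D where D: "\<And>i. D i 0 = (\<lambda>t. f t $ i) \<and> (\<forall>m t. (D i m has_vector_derivative D i (Suc m) t) (at t))"
    using assms unfolding smooth_real_def by metis
  show ?thesis unfolding smooth_real_def
  proof (rule exI[of _ "\<lambda>m t. \<chi> i. D i m t"], intro conjI allI)
    show "(\<lambda>t. \<chi> i. D i 0 t) = f" using D by (auto simp: vec_eq_iff)
    fix m t show "((\<lambda>t. \<chi> i. D i m t) has_vector_derivative (\<chi> i. D i (Suc m) t)) (at t)"
      by (rule has_vector_derivative_vec) (use D in simp)
  qed
qed

lemma smooth_comp:
  fixes f :: "real \<Rightarrow> 'a::real_normed_vector ^ 'n::finite"
  assumes "smooth_real f"
  shows "smooth_real (\<lambda>t. f t $ i)"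
  using smooth_linear[OF assms bounded_linear_vec_nth] .

lemma smooth_mat_entries:
  fixes F :: "real \<Rightarrow> complex^'n::finite^'n"
  assumes "\<And>i j. smooth_real (\<lambda>t. F t $ i $ j)"
  shows "smooth_real F"
  by (intro smooth_vec assms)

lemma smooth_entry:
  fixes F :: "real \<Rightarrow> complex^'n::finite^'n"
  assumes "smooth_real F"
  shows "smooth_real (\<lambda>t. F t $ i $ j)"
  by (intro smooth_comp assms)

lemma smooth_matmult:
  fixes F G :: "real \<Rightarrow> complex^'n::finite^'n"
  assumes "smooth_real F" "smooth_real G"
  shows "smooth_real (\<lambda>t. F t ** G t)"
  by (rule smooth_mat_entries)
    (auto simp: matrix_matrix_mult_def intro!: smooth_sum smooth_mult smooth_entry assms)

lemma smooth_ctrans: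
  fixes F :: "real \<Rightarrow> complex^'n::finite^'n"
  assumes "smooth_real F"
  shows "smooth_real (\<lambda>t. ctrans (F t))"
  by (rule smooth_mat_entries) (auto simp: ctrans_def intro!: smooth_cnj smooth_entry assms)

lemma smooth_holo_scalar:
  assumes "f holomorphic_on S" "open S" "\<And>t. c * cis t \<in> S"
  shows "smooth_real (\<lambda>t. f (c * cis t))"
proof -
  define P where "P m = ((\<lambda>g w. \<i> * w * deriv g w) ^^ m) f" for m
  have P0: "P 0 = f" and PS: "P (Suc m) = (\<lambda>w. \<i> * w * deriv (P m) w)" for m
    by (simp_all add: P_def)
  have hol: "P m holomorphic_on S" for m
    by (induction m) (auto simp: P0 PS intro!: holomorphic_intros holomorphic_deriv assms)
  have "((\<lambda>t. P m (c * cis t)) has_vector_derivative P (Suc m) (c * cis t)) (at t)" for m t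
  proof -
    have d1: "((\<lambda>t. c * cis t) has_vector_derivative (c * (\<i> * cis t))) (at t)"
    proof -
      have "((\<lambda>x. c * exp (\<i> * x)) has_field_derivative c * (\<i> * exp (\<i> * of_real t))) (at (of_real t))"
        by (auto intro!: derivative_eq_intros)
      from has_vector_derivative_real_field[OF this]
      show ?thesis by (simp add: cis_conv_exp)
    qed
    have d2: "(P m has_field_derivative deriv (P m) (c * cis t)) (at (c * cis t))"
      using hol[of m] assms(2,3) holomorphic_derivI by blast
    from field_vector_diff_chain_at[OF d1 d2]
    show ?thesis by (simp add: PS o_def algebra_simps)
  qed
  then show ?thesis unfolding smooth_real_def
    by (intro exI[of _ "\<lambda>m t. P m (c * cis t)"]) (auto simp: P0)
qed

lemma smooth_holo:
  fixes F :: "complex \<Rightarrow> complex^'n::finite^'n"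
  assumes "mholo F S" "open S" "\<And>t. c * cis t \<in> S"
  shows "smooth_real (\<lambda>t. F (c * cis t))"
  by (rule smooth_mat_entries)
    (use assms in \<open>auto simp: mholo_def intro!: smooth_holo_scalar[where S=S]\<close>)

lemma inv_right: "invertible (A::'a::semiring_1^'n^'m) \<Longrightarrow> A ** matrix_inv A = mat 1"
  unfolding invertible_def matrix_inv_def by (rule someI2_ex) auto

lemma inv_left: "invertible (A::'a::semiring_1^'n^'m) \<Longrightarrow> matrix_inv A ** A = mat 1"
  unfolding invertible_def matrix_inv_def by (rule someI2_ex) auto

lemma inv_unique:
  fixes A B :: "'a::semiring_1^'n^'n"
  assumes "invertible A" "A ** B = mat 1"
  shows "matrix_inv A = B"
proof -
  have "matrix_inv A = matrix_inv A ** (A ** B)" by (simp add: assms)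
  also have "\<dots> = B" by (simp only: matrix_mul_assoc inv_left[OF assms(1)] matrix_mul_lid)
  finally show ?thesis .
qed

lemma inv_invertible: "invertible (A::'a::semiring_1^'n^'n) \<Longrightarrow> invertible (matrix_inv A)"
  unfolding invertible_def using inv_left inv_right invertible_def by blast

lemma inv_inv: "invertible (A::'a::semiring_1^'n^'n) \<Longrightarrow> matrix_inv (matrix_inv A) = A"
  by (intro inv_unique inv_invertible inv_left)

lemma inv_mult:
  fixes A B :: "'a::semiring_1^'n^'n"
  assumes "invertible A" "invertible B"
  shows "matrix_inv (A ** B) = matrix_inv B ** matrix_inv A"
proof (rule inv_unique)
  show "invertible (A ** B)" using assms invertible_mult by blast
  have "A ** B ** (matrix_inv B ** matrix_inv A) = A ** (B ** matrix_inv B) ** matrix_inv A"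
    by (simp add: matrix_mul_assoc)
  then show "A ** B ** (matrix_inv B ** matrix_inv A) = mat 1" by (simp add: inv_right assms)
qed

lemma ctrans_mult: "ctrans (A ** B) = ctrans B ** ctrans (A::'n::finite cmat)"
  by (simp add: vec_eq_iff ctrans_def matrix_matrix_mult_def mult.commute)

lemma ctrans_ctrans [simp]: "ctrans (ctrans A) = (A::'n::finite cmat)"
  by (simp add: vec_eq_iff ctrans_def)

lemma ctrans_mat1 [simp]: "ctrans (mat 1) = (mat 1::'n::finite cmat)"
  by (simp add: vec_eq_iff ctrans_def mat_def)

lemma ctrans_invertible: "invertible (A::'n::finite cmat) \<Longrightarrow> invertible (ctrans A)"
  unfolding invertible_def by (metis ctrans_mult ctrans_mat1)

lemma ctrans_inv: "invertible (A::'n::finite cmat) \<Longrightarrow> matrix_inv (ctrans A) = ctrans (matrix_inv A)"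
proof (intro inv_unique ctrans_invertible)
  assume "invertible A"
  then have "ctrans (matrix_inv A ** A) = mat 1" by (simp add: inv_left)
  then show "ctrans A ** ctrans (matrix_inv A) = mat 1" by (simp only: ctrans_mult)
qed auto

lemma cbar_invertible: "invertible (A::'n::finite cmat) \<Longrightarrow> invertible (cbar A)"
  unfolding cbar_def by (intro inv_invertible ctrans_invertible)

lemma cbar_cbar: "invertible (A::'n::finite cmat) \<Longrightarrow> cbar (cbar A) = A"
  unfolding cbar_def
  by (simp add: ctrans_inv inv_invertible inv_inv ctrans_invertible)

lemma cbar_mult:
  "invertible (A::'n::finite cmat) \<Longrightarrow> invertible B \<Longrightarrow> cbar (A ** B) = cbar A ** cbar B"
  unfolding cbar_def by (simp add: ctrans_mult inv_mult ctrans_invertible)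

lemma cbar_inv: "invertible (A::'n::finite cmat) \<Longrightarrow> cbar (matrix_inv A) = matrix_inv (cbar A)"
  unfolding cbar_def by (simp add: ctrans_inv inv_invertible ctrans_invertible)

lemma inv_ctrans_cbar: "invertible (A::'n::finite cmat) \<Longrightarrow> matrix_inv A = ctrans (cbar A)"
  unfolding cbar_def by (simp add: ctrans_inv inv_invertible ctrans_invertible)

locale tws =
  fixes Gc :: "'n::finite cmat set" and tau :: "'n cmat \<Rightarrow> 'n cmat" and k :: nat and B :: "'n cmat set"
  assumes setting: "twisted_setting Gc tau k B"
begin

lemma G1: "mat 1 \<in> Gc" and Ginv: "X \<in> Gc \<Longrightarrow> invertible X" and Gmult: "X \<in> Gc \<Longrightarrow> Y \<in> Gc \<Longrightarrow> X ** Y \<in> Gc"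
  and Gminv: "X \<in> Gc \<Longrightarrow> matrix_inv X \<in> Gc"
  using setting unfolding twisted_setting_def is_mgroup_def by auto

lemma k2: "2 \<le> k" using setting unfolding twisted_setting_def by auto

lemma tau_mult: "X \<in> Gc \<Longrightarrow> Y \<in> Gc \<Longrightarrow> tau (X ** Y) = tau X ** tau Y"
  using setting unfolding twisted_setting_def by auto

lemma tau_G: "X \<in> Gc \<Longrightarrow> tau X \<in> Gc"
  using setting unfolding twisted_setting_def bij_betw_def by auto

lemma tau_1: "tau (mat 1) = mat 1"
proof -
  have "tau (mat 1) ** tau (mat 1) = tau (mat 1)" using tau_mult[OF G1 G1] by simp
  then have "matrix_inv (tau (mat 1)) ** (tau (mat 1) ** tau (mat 1)) = matrix_inv (tau (mat 1)) ** tau (mat 1)"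
    by simp
  then show ?thesis by (simp add: matrix_mul_assoc inv_left Ginv tau_G G1)
qed

lemma tau_inv: "X \<in> Gc \<Longrightarrow> tau (matrix_inv X) = matrix_inv (tau X)"
  by (metis Ginv Gminv inv_right inv_unique tau_1 tau_G tau_mult)

lemma cbar_G: "X \<in> Gc \<Longrightarrow> cbar X \<in> Gc"
  using setting unfolding twisted_setting_def cbar_def is_mgroup_def by auto

lemma omega_norm: "norm (omega k) = 1"
  unfolding omega_def using k2 by (simp add: norm_exp_eq_Re)

lemma omega_nz: "omega k \<noteq> 0" using omega_norm by auto

end

lemma open_annulus: "open {z::complex. a < norm z \<and> norm z < b}"
  by (intro open_Collect_conj open_Collect_less continuous_intros)

lemma glue_holo:
  fixes f :: "complex \<Rightarrow> complex"
  assumes r: "0 < r" "r < R" and h1: "f holomorphic_on ball 0 r"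
    and h2: "f holomorphic_on {z. r < norm z \<and> norm z < R}"
    and c: "continuous_on (ball 0 R) f"
  shows "f holomorphic_on ball 0 R"
proof -
  have "f field_differentiable at z" if z: "z \<in> ball 0 R" for z
  proof -
    consider "norm z < r" | "r < norm z" | "norm z = r" by linarith
    then show ?thesis
    proof cases
      case 1 then show ?thesis using holomorphic_on_imp_differentiable_at[OF h1] by auto
    next
      case 2 then show ?thesis using holomorphic_on_imp_differentiable_at[OF h2 open_annulus] z by auto
    next
      case 3
      define d where "d = ln (R / r)"
      have d: "0 < d" using r by (simp add: d_def)
      have ed: "exp d = R / r" using r by (simp add: d_def)
      define h where "h = (\<lambda>w. f (z * exp w))"
      have nz: "norm (z * exp w) = r * exp (Re w)" for w
        using 3 by (simp add: norm_mult)
      have inR: "norm (z * exp w) < R" if "w \<in> ball 0 d" for w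
      proof -
        have "Re w < d" using that complex_Re_le_cmod[of w] by (simp add: dist_norm) 
        then have "exp (Re w) < R / r" using ed by (metis exp_less_cancel_iff)
        then show ?thesis using r nz by (simp add: field_simps)
      qed
      have hh: "h holomorphic_on ball 0 d"
      proof (rule holomorphic_on_paste_across_line[OF open_ball, of 1 h 0])
        show "h holomorphic_on ball 0 d \<inter> {w. 1 \<bullet> w < 0}"
          unfolding h_def
          apply (rule holomorphic_on_compose_gen[where g=f and t="ball 0 r", unfolded o_def, OF _ h1])
          using r by (auto intro!: holomorphic_intros simp: nz inner_complex_def)
        show "h holomorphic_on ball 0 d \<inter> {w. 0 < 1 \<bullet> w}"
          unfolding h_def
          apply (rule holomorphic_on_compose_gen[where g=f and t="{z. r < norm z \<and> norm z < R}", unfolded o_def, OF _ h2])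
          using r inR by (auto intro!: holomorphic_intros simp: nz inner_complex_def)
        show "continuous_on (ball 0 d) h"
          unfolding h_def
          apply (rule continuous_on_compose2[OF c])
          using inR by (auto intro!: continuous_intros)
      qed auto
      have "h field_differentiable at 0"
        using holomorphic_on_imp_differentiable_at[OF hh] d by auto
      moreover have "(\<lambda>x. Ln (x / z)) field_differentiable at z"
      proof -
        have "(\<lambda>x. x / z) field_differentiable at z" using DERIV_cdivide[OF DERIV_ident, of z z] unfolding field_differentiable_def by blast
        moreover have "Ln field_differentiable at (z / z)" using 3 r by (auto intro!: field_differentiable_at_Ln)
        ultimately show ?thesis using field_differentiable_compose[of "\<lambda>x. x / z" z Ln] by (simp add: o_def)
      qed
      ultimately have "(h \<circ> (\<lambda>x. Ln (x / z))) field_differentiable at z"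
        using 3 r by (intro field_differentiable_compose) auto
      moreover have "(h \<circ> (\<lambda>x. Ln (x / z))) x = f x" if "dist x z < r" for x
      proof -
        have "x \<noteq> 0" using that 3 by (auto simp: dist_norm)
        moreover have "z \<noteq> 0" using 3 r by auto
        ultimately have "exp (Ln (x / z)) = x / z" by (simp add: exp_Ln)
        then show ?thesis using \<open>z \<noteq> 0\<close> by (simp add: h_def)
      qed
      ultimately show ?thesis
        using field_differentiable_transform_within[of r z UNIV "h \<circ> (\<lambda>x. Ln (x / z))" f] r by auto
    qed
  qed
  then show ?thesis unfolding holomorphic_on_def using field_differentiable_at_within by blast
qed

lemma cont_entries:
  fixes F :: "'a::topological_space \<Rightarrow> complex^'n::finite^'n"
  assumes "\<And>i j. continuous_on S (\<lambda>z. F z $ i $ j)"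
  shows "continuous_on S F"
proof -
  have "continuous_on S (\<lambda>z. \<chi> i. \<chi> j. F z $ i $ j)"
    by (intro continuous_on_vec_lambda assms)
  then show ?thesis by simp
qed

lemma mholo_mult: "mholo F S \<Longrightarrow> mholo G S \<Longrightarrow> mholo (\<lambda>z. F z ** G z) S"
  unfolding mholo_def matrix_matrix_mult_def by (auto intro!: holomorphic_intros)

lemma mholo_subset: "mholo F S \<Longrightarrow> T \<subseteq> S \<Longrightarrow> mholo F T"
  unfolding mholo_def using holomorphic_on_subset by blast

lemma mholo_cong: "mholo F S \<Longrightarrow> (\<And>z. z \<in> S \<Longrightarrow> F z = G z) \<Longrightarrow> mholo G S"
  unfolding mholo_def
proof (intro allI)
  fix i j
  assume "\<forall>i j. (\<lambda>z. F z $ i $ j) holomorphic_on S" "\<And>z. z \<in> S \<Longrightarrow> F z = G z"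
  then show "(\<lambda>z. G z $ i $ j) holomorphic_on S"
    using holomorphic_transform[of "\<lambda>z. F z $ i $ j" S "\<lambda>z. G z $ i $ j"] by auto
qed

lemma mholo_compose:
  "mholo F T \<Longrightarrow> g holomorphic_on S \<Longrightarrow> g ` S \<subseteq> T \<Longrightarrow> mholo (\<lambda>z. F (g z)) S"
  unfolding mholo_def using holomorphic_on_compose_gen[of g S _ T, unfolded o_def] by blast

lemma mholo_continuous: "mholo F S \<Longrightarrow> continuous_on S F"
  unfolding mholo_def by (intro cont_entries holomorphic_on_imp_continuous_on) auto

lemma cont_mult:
  fixes F G :: "'a::topological_space \<Rightarrow> complex^'n::finite^'n"
  shows "continuous_on S F \<Longrightarrow> continuous_on S G \<Longrightarrow> continuous_on S (\<lambda>z. F z ** G z)"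
  unfolding matrix_matrix_mult_def
  by (intro cont_entries) (auto intro!: continuous_intros)

lemma cont_ctrans:
  fixes F :: "'a::topological_space \<Rightarrow> complex^'n::finite^'n"
  shows "continuous_on S F \<Longrightarrow> continuous_on S (\<lambda>z. ctrans (F z))"
  unfolding ctrans_def
  by (intro cont_entries) (auto intro!: continuous_intros)

lemma mholo_reflect:
  assumes "mholo F T" "open S" "0 \<notin> S" "\<And>z. z \<in> S \<Longrightarrow> 1 / cnj z \<in> T"
  shows "mholo (\<lambda>z. ctrans (F (1 / cnj z))) S"
  unfolding mholo_def
proof (intro allI)
  fix i j
  have "(\<lambda>w. F (1 / w) $ j $ i) holomorphic_on cnj ` S"
  proof -
    have "(\<lambda>w. F (1 / w)) ` (cnj ` S) \<subseteq> F ` T" using assms(4) by auto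
    have "(\<lambda>w. 1 / w) holomorphic_on cnj ` S" using assms(3) by (auto intro!: holomorphic_intros)
    moreover have "(\<lambda>w. 1 / w) ` (cnj ` S) \<subseteq> T" using assms(4) by auto
    ultimately show ?thesis using assms(1) unfolding mholo_def
      using holomorphic_on_compose_gen[of "\<lambda>w. 1 / w" "cnj ` S" "\<lambda>x. F x $ j $ i" T] by (simp add: o_def)
  qed
  from holomorphic_on_compose_cnj_cnj[OF this assms(2)]
  show "(\<lambda>z. ctrans (F (1 / cnj z)) $ i $ j) holomorphic_on S"
    by (simp add: o_def ctrans_def)
qed

lemma mglue:
  fixes F :: "complex \<Rightarrow> complex^'n::finite^'n"
  assumes "0 < r" "r < R" "mholo F (ball 0 r)" "mholo F {z. r < norm z \<and> norm z < R}"
    "continuous_on (ball 0 R) F"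
  shows "mholo F (ball 0 R)"
  unfolding mholo_def
proof (intro allI)
  fix i j
  show "(\<lambda>z. F z $ i $ j) holomorphic_on ball 0 R"
    using assms unfolding mholo_def
    by (intro glue_holo[OF assms(1,2)] continuous_on_component) auto
qed

lemma inv_cnj_cis: "c \<noteq> 0 \<Longrightarrow> 1 / cnj (of_real c * cis t) = of_real (1 / c) * cis t"
proof -
  assume "c \<noteq> 0"
  have "cis t * cis (- t) = 1" by (simp add: cis_mult)
  then show ?thesis using \<open>c \<noteq> 0\<close> by (simp add: cis_cnj field_simps)
qed

context tws
begin

lemma Ccirc_omega: "z \<in> Ccirc e \<Longrightarrow> omega k * z \<in> Ccirc e"
  unfolding Ccirc_def by (auto simp: norm_mult omega_norm)

lemma Ccirc_refl: "0 < e \<Longrightarrow> z \<in> Ccirc e \<Longrightarrow> 1 / cnj z \<in> Ccirc e"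
  unfolding Ccirc_def by (auto simp: norm_divide)

lemma Ccirc_cis1: "0 < e \<Longrightarrow> of_real e * cis t \<in> Ccirc e"
  unfolding Ccirc_def by (auto simp: norm_mult norm_divide)

lemma Ccirc_cis2: "0 < e \<Longrightarrow> of_real (1/e) * cis t \<in> Ccirc e"
  unfolding Ccirc_def by (auto simp: norm_mult norm_divide)

lemma Lam_cong:
  assumes "0 < e" "f \<in> Lam Gc tau k e" "\<And>z. z \<in> Ccirc e \<Longrightarrow> f z = g z"
  shows "g \<in> Lam Gc tau k e"
proof -
  have "(\<lambda>t. f (of_real e * cis t)) = (\<lambda>t. g (of_real e * cis t))"
       "(\<lambda>t. f (of_real (1/e) * cis t)) = (\<lambda>t. g (of_real (1/e) * cis t))"
    using assms(1,3) Ccirc_cis1 Ccirc_cis2 by auto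
  then show ?thesis using assms Ccirc_omega Ccirc_refl
    unfolding Lam_def smooth_on_circles_def by (simp add: Ccirc_omega Ccirc_refl)
qed

lemma Lam_mult:
  assumes "f \<in> Lam Gc tau k e" "g \<in> Lam Gc tau k e"
  shows "(\<lambda>z. f z ** g z) \<in> Lam Gc tau k e"
  using assms unfolding Lam_def smooth_on_circles_def
  by (auto intro!: smooth_matmult Gmult simp: tau_mult cbar_mult Ginv)

lemma Lam_inv:
  assumes "0 < e" "f \<in> Lam Gc tau k e"
  shows "(\<lambda>z. matrix_inv (f z)) \<in> Lam Gc tau k e"
proof -
  have fG: "f z \<in> Gc" if "z \<in> Ccirc e" for z using assms that unfolding Lam_def by auto
  have key: "matrix_inv (f z) = ctrans (f (1 / cnj z))" if "z \<in> Ccirc e" for z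
    using assms that fG[OF that] unfolding Lam_def by (simp add: inv_ctrans_cbar Ginv)
  have e0: "e \<noteq> 0" "1/e \<noteq> 0" using assms(1) by auto
  have "matrix_inv (f (of_real e * cis t)) = ctrans (f (of_real (1/e) * cis t))" for t
    using key[OF Ccirc_cis1[OF assms(1)], of t] unfolding inv_cnj_cis[OF e0(1)] .
  moreover have "matrix_inv (f (of_real (1/e) * cis t)) = ctrans (f (of_real e * cis t))" for t
    using key[OF Ccirc_cis2[OF assms(1)], of t] unfolding inv_cnj_cis[OF e0(2)] by simp
  ultimately have "(\<lambda>t. matrix_inv (f (of_real e * cis t))) = (\<lambda>t. ctrans (f (of_real (1/e) * cis t)))"
     "(\<lambda>t. matrix_inv (f (of_real (1/e) * cis t))) = (\<lambda>t. ctrans (f (of_real e * cis t)))"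
    by auto
  then have "smooth_on_circles e (\<lambda>z. matrix_inv (f z))"
    using assms(2) unfolding Lam_def smooth_on_circles_def by (auto intro!: smooth_ctrans)
  then show ?thesis
    using assms fG unfolding Lam_def by (auto intro!: Gminv simp: tau_inv cbar_inv Ginv)
qed

lemma Lam_holo:
  assumes "0 < e" "mholo F U1" "open U1" "sphere 0 e \<subseteq> U1" "mholo F U2" "open U2" "sphere 0 (1/e) \<subseteq> U2"
    and "\<And>z. z \<in> Ccirc e \<Longrightarrow> F z \<in> Gc" "\<And>z. z \<in> Ccirc e \<Longrightarrow> F (omega k * z) = tau (F z)"
    "\<And>z. z \<in> Ccirc e \<Longrightarrow> cbar (F z) = F (1 / cnj z)"
  shows "F \<in> Lam Gc tau k e"
proof -
  have "smooth_real (\<lambda>t. F (of_real e * cis t))"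
    by (rule smooth_holo[OF assms(2,3)]) (use assms(1,4) in \<open>auto simp: norm_mult\<close>)
  moreover have "smooth_real (\<lambda>t. F (of_real (1/e) * cis t))"
    by (rule smooth_holo[OF assms(5,6)]) (use assms(1,7) in \<open>auto simp: norm_mult norm_divide\<close>)
  ultimately show ?thesis using assms unfolding Lam_def smooth_on_circles_def by auto
qed

end

lemma inv_lt1: assumes "0 < e" "1/e < (x::real)" shows "1/x < e"
proof -
  have "0 < 1/e" using assms by simp
  then have "0 < x" using assms by linarith
  then show ?thesis using assms by (simp add: field_simps)
qed

lemma inv_le1: assumes "0 < e" "1/e \<le> (x::real)" shows "1/x \<le> e"
proof -
  have "0 < 1/e" using assms by simp
  then have "0 < x" using assms by linarith
  then show ?thesis using assms by (simp add: field_simps)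
qed

lemma inv_lt2: assumes "0 < e" "(x::real) < e" "0 < x" shows "1/e < 1/x"
  using assms by (simp add: frac_less2)

lemma inv_le2: assumes "0 < e" "(x::real) \<le> e" "0 < x" shows "1/e \<le> 1/x"
  using assms by (simp add: frac_le)

lemma e_lt_inv: assumes "0 < e" "e < (1::real)" shows "e < 1/e"
proof -
  have "1 < 1/e" using assms by simp
  then show ?thesis using assms by linarith
qed

context tws
begin

lemma LamE_cong:
  assumes "0 < e" "f \<in> LamE Gc tau k e" "\<And>z. z \<in> Ccirc e \<Longrightarrow> f z = g z"
  shows "g \<in> LamE Gc tau k e"
proof -
  obtain F where "EExt Gc tau k e f F" "f \<in> Lam Gc tau k e" using assms(2) unfolding LamE_def by auto
  moreover have "g \<in> Lam Gc tau k e" by (rule Lam_cong[OF assms(1) calculation(2) assms(3)])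
  moreover have "EExt Gc tau k e g F" using calculation(1) assms(3) unfolding EExt_def by simp
  ultimately have "EExt Gc tau k e g F" "g \<in> Lam Gc tau k e" by auto
  then show ?thesis unfolding LamE_def by auto
qed

lemma dress_char:
  assumes fac: "unique_factorization Gc tau k B" and e: "0 < e" "e < 1"
    and P: "(\<lambda>z. g z ** h z) \<in> Lam Gc tau k e"
  shows "dress Gc tau k B e g h \<in> LamE Gc tau k e \<and>
      (\<exists>kI\<in>LamIB Gc tau k B e. \<forall>z\<in>Ccirc e. g z ** h z = dress Gc tau k B e g h z ** kI z)"
    and "\<And>hE hI. hE \<in> LamE Gc tau k e \<Longrightarrow> hI \<in> LamIB Gc tau k B e \<Longrightarrow>
          \<forall>z\<in>Ccirc e. g z ** h z = hE z ** hI z \<Longrightarrow> \<forall>z\<in>Ccirc e. dress Gc tau k B e g h z = hE z"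
proof -
  have F: "(\<exists>hE\<in>LamE Gc tau k e. \<exists>hI\<in>LamIB Gc tau k B e. \<forall>z\<in>Ccirc e. g z ** h z = hE z ** hI z) \<and>
         (\<forall>hE\<in>LamE Gc tau k e. \<forall>hI\<in>LamIB Gc tau k B e.
          \<forall>hE'\<in>LamE Gc tau k e. \<forall>hI'\<in>LamIB Gc tau k B e.
            (\<forall>z\<in>Ccirc e. g z ** h z = hE z ** hI z) \<longrightarrow> (\<forall>z\<in>Ccirc e. g z ** h z = hE' z ** hI' z) \<longrightarrow>
            (\<forall>z\<in>Ccirc e. hE z = hE' z \<and> hI z = hI' z))"
    using bspec[OF mp[OF spec[OF fac[unfolded unique_factorization_def], of e] conjI[OF e]] P] .
  note F1 = conjunct1[OF F] and F2 = conjunct2[OF F]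
  obtain kE kI where kE: "kE \<in> LamE Gc tau k e" and kI: "kI \<in> LamIB Gc tau k B e"
    and fk: "\<forall>z\<in>Ccirc e. g z ** h z = kE z ** kI z" using F1 by blast
  define kE0 where "kE0 z = (if z \<in> Ccirc e then kE z else 0)" for z
  define Pr where "Pr X \<longleftrightarrow> X \<in> LamE Gc tau k e \<and> (\<forall>z. z \<notin> Ccirc e \<longrightarrow> X z = 0) \<and>
       (\<exists>kI\<in>LamIB Gc tau k B e. \<forall>z\<in>Ccirc e. g z ** h z = X z ** kI z)" for X
  have k0: "kE0 \<in> LamE Gc tau k e" by (rule LamE_cong[OF e(1) kE]) (simp add: kE0_def)
  have "\<forall>z\<in>Ccirc e. g z ** h z = kE0 z ** kI z" using fk by (simp add: kE0_def)
  then have "Pr kE0" unfolding Pr_def using k0 kI by (auto simp: kE0_def)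
  moreover have "X = kE0" if PX: "Pr X" for X
  proof
    fix z
    obtain kX where X: "X \<in> LamE Gc tau k e" "kX \<in> LamIB Gc tau k B e" "\<forall>z\<in>Ccirc e. g z ** h z = X z ** kX z"
      "\<forall>z. z \<notin> Ccirc e \<longrightarrow> X z = 0"
      using PX unfolding Pr_def by blast
    have "\<forall>z\<in>Ccirc e. X z = kE z \<and> kX z = kI z"
      using F2[rule_format, OF X(1,2) kE kI X(3)[rule_format] fk[rule_format]] by blast
    then show "X z = kE0 z" using X(4) unfolding kE0_def by (cases "z \<in> Ccirc e") auto
  qed
  ultimately have ex: "\<exists>!X. Pr X" by blast
  have dd: "dress Gc tau k B e g h = (THE X. Pr X)" unfolding dress_def Pr_def by simp
  have PD: "Pr (dress Gc tau k B e g h)" unfolding dd by (rule theI'[OF ex])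
  then obtain kX where D: "dress Gc tau k B e g h \<in> LamE Gc tau k e" "kX \<in> LamIB Gc tau k B e"
      "\<forall>z\<in>Ccirc e. g z ** h z = dress Gc tau k B e g h z ** kX z"
      unfolding Pr_def by blast
  then show "dress Gc tau k B e g h \<in> LamE Gc tau k e \<and>
      (\<exists>kI\<in>LamIB Gc tau k B e. \<forall>z\<in>Ccirc e. g z ** h z = dress Gc tau k B e g h z ** kI z)"
    by blast
  fix hE hI assume H: "hE \<in> LamE Gc tau k e" "hI \<in> LamIB Gc tau k B e" "\<forall>z\<in>Ccirc e. g z ** h z = hE z ** hI z"
  show "\<forall>z\<in>Ccirc e. dress Gc tau k B e g h z = hE z"
    using F2[rule_format, OF D(1,2) H(1,2) D(3)[rule_format] H(3)[rule_format]] by blast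
qed

lemma iext_dom:
  assumes I: "IExt Gc tau k e g F Finf" and e: "0 < e" and z: "norm z \<le> e \<or> 1/e \<le> norm z"
  shows "F z \<in> Gc" "F (omega k * z) = tau (F z)" "z \<noteq> 0 \<Longrightarrow> cbar (F z) = F (1 / cnj z)"
proof -
  have inG: "F w \<in> Gc" if "norm w \<le> e" for w using I that unfolding IExt_def by auto
  have ch: "at_inf_chart F Finf w = F (1 / w)" if "w \<noteq> 0" for w using that by (simp add: at_inf_chart_def)
  have A: "F z \<in> Gc \<and> F (omega k * z) = tau (F z)"
  proof (cases "norm z \<le> e")
    case True then show ?thesis using I unfolding IExt_def by auto
  next
    case False
    then have zz: "z \<noteq> 0" "1/e \<le> norm z" using z e by auto
    define \<mu> where "\<mu> = 1 / z"
    have mu: "\<mu> \<in> cball 0 e" "\<mu> \<noteq> 0" "\<mu> / omega k \<noteq> 0" using zz e omega_nz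
      by (auto simp: \<mu>_def norm_divide field_simps)
    have "at_inf_chart F Finf \<mu> \<in> Gc" "at_inf_chart F Finf (\<mu> / omega k) = tau (at_inf_chart F Finf \<mu>)"
      using I mu unfolding IExt_def by auto
    then show ?thesis using mu zz omega_nz by (simp add: ch \<mu>_def ac_simps)
  qed
  then show "F z \<in> Gc" by auto
  from A show "F (omega k * z) = tau (F z)" by auto
  show "cbar (F z) = F (1 / cnj z)" if z0: "z \<noteq> 0"
  proof (cases "norm z \<le> e")
    case True then show ?thesis using I z0 unfolding IExt_def by (auto simp: ch)
  next
    case False
    then have zz: "1/e \<le> norm z" using z by auto
    define w where "w = 1 / cnj z"
    have w: "w \<in> cball 0 e" "w \<noteq> 0" "cnj w \<noteq> 0" using zz e z0 by (auto simp: w_def norm_divide field_simps)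
    have "cbar (F w) = F z" using I w unfolding IExt_def by (auto simp: ch w_def)
    moreover have "F w \<in> Gc" using w inG by auto
    ultimately have "cbar (F z) = F w" using cbar_cbar Ginv by metis
    then show ?thesis by (simp add: w_def)
  qed
qed

lemma iext_hol_out:
  assumes I: "IExt Gc tau k e g F Finf" and e: "0 < e"
  shows "mholo F {z. 1/e < norm z}"
proof -
  have "mholo (at_inf_chart F Finf) (ball 0 e)" using I unfolding IExt_def by auto
  then have "mholo (\<lambda>z. at_inf_chart F Finf (1 / z)) {z. 1/e < norm z}"
    apply (rule mholo_compose)
    using e by (auto intro!: holomorphic_intros inv_lt1 simp: norm_divide)
  then show ?thesis
    by (rule mholo_cong) (use e in \<open>auto simp: at_inf_chart_def\<close>)
qed

lemma eext_restrict:
  assumes E: "EExt Gc tau k e G F" and e: "0 < e" "e < e'" "e' < 1"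
  shows "F \<in> LamE Gc tau k e'" "EExt Gc tau k e' F F"
proof -
  have ie: "1/e' < 1/e" "e' < 1/e'" using e by (auto intro: inv_lt2 e_lt_inv)
  have sub: "Eclos e' \<subseteq> Eclos e" "Eann e' \<subseteq> Eann e" "Ccirc e' \<subseteq> Eclos e"
    using e ie by (auto simp: Eclos_def Eann_def Ccirc_def)
  have op: "open (Eann e)" unfolding Eann_def by (rule open_annulus)
  have sph: "sphere 0 e' \<subseteq> Eann e" "sphere 0 (1/e') \<subseteq> Eann e"
    using e ie by (auto simp: Eann_def)
  have hol: "mholo F (Eann e)" using E unfolding EExt_def by auto
  have p: "\<And>z. z \<in> Eclos e \<Longrightarrow> F z \<in> Gc \<and> F (omega k * z) = tau (F z) \<and> cbar (F z) = F (1 / cnj z)"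
    using E unfolding EExt_def by auto
  have c: "continuous_on (Eclos e) F" using E unfolding EExt_def by auto
  show EE: "EExt Gc tau k e' F F"
    unfolding EExt_def
  proof (intro conjI ballI)
    show "mholo F (Eann e')" using mholo_subset[OF hol sub(2)] .
    show "continuous_on (Eclos e') F" using continuous_on_subset[OF c sub(1)] .
  qed (use sub p in auto)
  have "F \<in> Lam Gc tau k e'"
    by (rule Lam_holo[OF _ hol op sph(1) hol op sph(2)]) (use e sub p in auto)
  then show "F \<in> LamE Gc tau k e'" using EE unfolding LamE_def by auto
qed

end

lemma open_outside: "open {z::complex. a < norm z}"
  by (intro open_Collect_less continuous_intros)

lemma mholo_cnj:
  assumes "mholo F T" "open S" "\<And>z. z \<in> S \<Longrightarrow> cnj z \<in> T"
  shows "mholo (\<lambda>z. ctrans (F (cnj z))) S"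
  unfolding mholo_def
proof (intro allI)
  fix i j
  have "(\<lambda>w. F w $ j $ i) holomorphic_on cnj ` S"
    using assms(1,3) unfolding mholo_def by (auto intro: holomorphic_on_subset)
  from holomorphic_on_compose_cnj_cnj[OF this assms(2)]
  show "(\<lambda>z. ctrans (F (cnj z)) $ i $ j) holomorphic_on S"
    by (simp add: o_def ctrans_def)
qed

context tws
begin

lemma iext_zero:
  assumes "IExt Gc tau k e g F Finf" "0 < e"
  shows "Finf \<in> Gc" "tau Finf = Finf" "cbar (F 0) = Finf"
proof -
  have z: "(0::complex) \<in> cball 0 e" using assms(2) by simp
  have "at_inf_chart F Finf 0 \<in> Gc" "at_inf_chart F Finf (0 / omega k) = tau (at_inf_chart F Finf 0)"
     "cbar (F 0) = at_inf_chart F Finf (cnj 0)"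
    using assms(1) z unfolding IExt_def by blast+
  then show "Finf \<in> Gc" "tau Finf = Finf" "cbar (F 0) = Finf"
    by (simp_all add: at_inf_chart_def)
qed

lemma iext_intro:
  assumes e: "0 < e"
    and h1: "mholo F (ball 0 e)" and c1: "continuous_on (cball 0 e) F"
    and h2: "mholo (at_inf_chart F Finf) (ball 0 e)" and c2: "continuous_on (cball 0 e) (at_inf_chart F Finf)"
    and gF: "\<And>z. z \<in> Ccirc e \<Longrightarrow> F z = g z"
    and dom: "\<And>z. norm z \<le> e \<or> 1/e \<le> norm z \<Longrightarrow>
        F z \<in> Gc \<and> F (omega k * z) = tau (F z) \<and> (z \<noteq> 0 \<longrightarrow> cbar (F z) = F (1 / cnj z))"
    and inf: "Finf \<in> Gc" "tau Finf = Finf" "cbar (F 0) = Finf"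
  shows "IExt Gc tau k e g F Finf"
  unfolding IExt_def
proof (intro conjI ballI h1 c1 h2 c2)
  fix z :: complex assume z: "z \<in> cball 0 e"
  then have zn: "norm z \<le> e" by simp
  have inv: "1 / e \<le> norm (1 / z)" if "z \<noteq> 0" using zn that e by (simp add: norm_divide inv_le2)
  show "F z \<in> Gc" using dom zn by blast
  show "at_inf_chart F Finf z \<in> Gc"
    using inf dom[OF disjI2[OF inv]] by (cases "z = 0") (auto simp: at_inf_chart_def)
  show "F (omega k * z) = tau (F z)" using dom zn by blast
  show "at_inf_chart F Finf (z / omega k) = tau (at_inf_chart F Finf z)"
  proof (cases "z = 0")
    case True then show ?thesis using inf by (simp add: at_inf_chart_def)
  next
    case False
    have "F (omega k * (1 / z)) = tau (F (1 / z))" using dom[OF disjI2[OF inv[OF False]]] by blast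
    then show ?thesis using False omega_nz by (simp add: at_inf_chart_def)
  qed
  show "cbar (F z) = at_inf_chart F Finf (cnj z)"
  proof (cases "z = 0")
    case True then show ?thesis using inf by (simp add: at_inf_chart_def)
  next
    case False
    then show ?thesis using dom zn by (simp add: at_inf_chart_def)
  qed
next
  fix z assume "z \<in> Ccirc e" then show "F z = g z" by (rule gF)
qed

end

lemma recip_range: fixes e x :: real assumes "0 < e" "e \<le> x" "x \<le> 1/e" shows "e \<le> 1/x" "1/x \<le> 1/e"
proof -
  have x: "0 < x" using assms by linarith
  show "1/x \<le> 1/e" using assms x by (simp add: frac_le)
  have "1/(1/e) \<le> 1/x" using assms x by (intro frac_le) auto
  then show "e \<le> 1/x" by simp
qed
lemma recip_range_strict: fixes e x :: real assumes "0 < e" "e < x" "x < 1/e" shows "e < 1/x" "1/x < 1/e"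
proof -
  have x: "0 < x" using assms by linarith
  show "1/x < 1/e" using assms x by (simp add: frac_less2)
  have "1/(1/e) < 1/x" using assms x by (intro frac_less2) auto
  then show "e < 1/x" by simp
qed

theorem proposition2p7:
  fixes Gc :: "'n::finite cmat set" and tau :: "'n cmat \<Rightarrow> 'n cmat" and k :: nat
    and B :: "'n cmat set" and e e' :: real
    and g h gx hx :: "complex \<Rightarrow> 'n cmat" and gxinf :: "'n cmat"
  assumes setting: "twisted_setting Gc tau k B"
    and factorization: "unique_factorization Gc tau k B"
    and eps: "0 < e" "e < e'" "e' < 1"
    and g: "g \<in> LamI Gc tau k e'" and gext: "IExt Gc tau k e' g gx gxinf"
    and h: "h \<in> LamE Gc tau k e" and hext: "EExt Gc tau k e h hx"
  shows "dress Gc tau k B e gx h \<in> LamE Gc tau k e \<and>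
         (\<exists>kx. EExt Gc tau k e (dress Gc tau k B e gx h) kx \<and>
               (\<forall>z\<in>Ccirc e'. dress Gc tau k B e' g hx z = kx z))"
proof -
  interpret tws Gc tau k B by unfold_locales (rule setting)
  have e1: "e < 1" and e'0: "0 < e'" using eps by linarith+
  have ie: "1/e' < 1/e" "e' < 1/e'" "e < 1/e" "e' < 1/e" "e < 1/e'"
    using eps e_lt_inv[OF e'0 eps(3)] inv_lt2[OF e'0 eps(2) eps(1)] by linarith+
  have Cc_E: "Ccirc e \<subseteq> Eclos e" using ie by (auto simp: Ccirc_def Eclos_def)
  have Cc'_E: "Ccirc e' \<subseteq> Eclos e" using ie eps by (auto simp: Ccirc_def Eclos_def)
  have Cc_nz: "z \<in> Ccirc e \<Longrightarrow> z \<noteq> 0" for z using eps by (auto simp: Ccirc_def)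
  note gdom = iext_dom[OF gext e'0]
  have gx_hol_in: "mholo gx (ball 0 e')" using gext unfolding IExt_def by auto
  have gx_hol_out: "mholo gx {z. 1/e' < norm z}" by (rule iext_hol_out[OF gext e'0])
  have gxL: "gx \<in> Lam Gc tau k e"
  proof (rule Lam_holo[OF eps(1) gx_hol_in open_ball _ gx_hol_out open_outside])
    show "sphere 0 e \<subseteq> ball 0 e'" using eps by auto
    show "sphere 0 (1 / e) \<subseteq> {z. 1 / e' < norm z}" using ie by auto
    fix z assume z: "z \<in> Ccirc e"
    then have zd: "norm z \<le> e' \<or> 1/e' \<le> norm z" using ie eps by (auto simp: Ccirc_def)
    show "gx z \<in> Gc" "gx (omega k * z) = tau (gx z)" using gdom[OF zd] by auto
    show "cbar (gx z) = gx (1 / cnj z)" using gdom(3)[OF zd Cc_nz[OF z]] .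
  qed
  have hL: "h \<in> Lam Gc tau k e" using h unfolding LamE_def by auto
  have PL: "(\<lambda>z. gx z ** h z) \<in> Lam Gc tau k e" by (rule Lam_mult[OF gxL hL])
  define D where "D = dress Gc tau k B e gx h"
  have DE: "D \<in> LamE Gc tau k e" and "\<exists>kI\<in>LamIB Gc tau k B e. \<forall>z\<in>Ccirc e. gx z ** h z = D z ** kI z"
    using dress_char(1)[OF factorization eps(1) e1 PL] unfolding D_def by auto
  then obtain kI where kI: "kI \<in> LamIB Gc tau k B e" and fD: "\<And>z. z \<in> Ccirc e \<Longrightarrow> gx z ** h z = D z ** kI z"
    by blast
  obtain KE where KE: "EExt Gc tau k e D KE" using DE unfolding LamE_def by auto
  obtain KI KIinf where KI: "IExt Gc tau k e kI KI KIinf" and KIB: "KI 0 \<in> B"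
    using kI unfolding LamIB_def by auto
  have KEp: "KE z \<in> Gc" "KE (omega k * z) = tau (KE z)" "cbar (KE z) = KE (1 / cnj z)" if "z \<in> Eclos e" for z
    using KE that unfolding EExt_def by auto
  have hxp: "hx z \<in> Gc" "hx (omega k * z) = tau (hx z)" "cbar (hx z) = hx (1 / cnj z)" if "z \<in> Eclos e" for z
    using hext that unfolding EExt_def by auto
  have KE_D: "KE z = D z" if "z \<in> Ccirc e" for z using KE that unfolding EExt_def by auto
  have hx_h: "hx z = h z" if "z \<in> Ccirc e" for z using hext that unfolding EExt_def by auto
  have KI_kI: "KI z = kI z" if "z \<in> Ccirc e" for z using KI that unfolding IExt_def by auto
  note KIdom = iext_dom[OF KI eps(1)]
  define Q where "Q z = matrix_inv (KE z) ** (gx z ** hx z)" for z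
  define hI where "hI z = (if e \<le> norm z \<and> norm z \<le> 1/e then Q z else KI z)" for z
  have Q_KI: "Q z = KI z" if z: "z \<in> Ccirc e" for z
  proof -
    have DG: "D z \<in> Gc" using KEp(1)[of z] KE_D[OF z] Cc_E z by auto
    have "Q z = matrix_inv (D z) ** (D z ** kI z)" unfolding Q_def using KE_D[OF z] hx_h[OF z] fD[OF z] by simp
    also have "\<dots> = kI z" by (simp add: matrix_mul_assoc inv_left Ginv[OF DG])
    finally show ?thesis using KI_kI[OF z] by simp
  qed
  have Qp: "Q z \<in> Gc" "Q (omega k * z) = tau (Q z)" "cbar (Q z) = Q (1 / cnj z)"
    if z: "z \<in> Eclos e" "norm z \<le> e' \<or> 1/e' \<le> norm z" for z
  proof -
    have z0: "z \<noteq> 0" using z(1) eps by (auto simp: Eclos_def)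
    have G: "KE z \<in> Gc" "gx z \<in> Gc" "hx z \<in> Gc" using KEp(1) hxp(1) gdom(1) z by auto
    show "Q z \<in> Gc" unfolding Q_def using G by (intro Gmult Gminv)
    show "Q (omega k * z) = tau (Q z)"
      unfolding Q_def using G z KEp(2) hxp(2) gdom(2)
      by (simp add: tau_mult tau_inv Gmult Gminv)
    show "cbar (Q z) = Q (1 / cnj z)"
      unfolding Q_def using G z KEp(3) hxp(3) gdom(3)[OF z(2) z0]
      by (simp add: cbar_mult cbar_inv Ginv Gmult Gminv inv_invertible)
  qed
  have hIdom: "hI z \<in> Gc \<and> hI (omega k * z) = tau (hI z) \<and> (z \<noteq> 0 \<longrightarrow> cbar (hI z) = hI (1 / cnj z))"
    if z: "norm z \<le> e' \<or> 1/e' \<le> norm z" for z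
  proof (cases "e \<le> norm z \<and> norm z \<le> 1/e")
    case True
    then have zE: "z \<in> Eclos e" by (simp add: Eclos_def)
    have z0: "z \<noteq> 0" using True eps by auto
    have nz: "0 < norm z" using z0 by simp
    have "1 / (1/e) \<le> 1 / norm z" using inv_le2[of "1/e" "norm z"] True eps nz by simp
    moreover have "1 / norm z \<le> 1 / e" using inv_le2[of "norm z" e] True eps nz by simp
    ultimately have "e \<le> norm (1 / cnj z) \<and> norm (1 / cnj z) \<le> 1/e"
      by (simp add: norm_divide)
    then show ?thesis using True Qp[OF zE z] by (simp add: hI_def norm_mult omega_norm z0)
  next
    case False
    then have zd: "norm z \<le> e \<or> 1/e \<le> norm z" by linarith
    have nI: "\<not> (e \<le> norm (1 / cnj z) \<and> norm (1 / cnj z) \<le> 1/e)" if "z \<noteq> 0"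
    proof
      assume a: "e \<le> norm (1 / cnj z) \<and> norm (1 / cnj z) \<le> 1/e"
      then have "e \<le> 1 / norm z" "1 / norm z \<le> 1 / e" by (auto simp: norm_divide)
      moreover have nz: "0 < norm z" using that by simp
      ultimately have "1 / (1 / norm z) \<le> 1 / e" "1 / (1/e) \<le> 1 / (1 / norm z)"
        using inv_le2[of "1 / norm z" e] inv_le2[of "1/e" "1 / norm z"] eps by auto
      then have "e \<le> norm z \<and> norm z \<le> 1/e" by simp
      then show False using False by blast
    qed
    have h1: "hI z = KI z" using False unfolding hI_def by auto
    have "norm (omega k * z) = norm z" by (simp add: norm_mult omega_norm)
    then have h2: "hI (omega k * z) = KI (omega k * z)" using False unfolding hI_def by auto
    have h3: "hI (1 / cnj z) = KI (1 / cnj z)" if "z \<noteq> 0" using nI[OF that] unfolding hI_def by auto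
    show ?thesis using KIdom[OF zd] h1 h2 h3 by simp
  qed
  have KEL': "KE \<in> LamE Gc tau k e'" and KEE': "EExt Gc tau k e' KE KE"
    using eext_restrict[OF KE eps] by auto
  have hxL': "hx \<in> Lam Gc tau k e'" using eext_restrict(1)[OF hext eps] unfolding LamE_def by auto
  have gL': "g \<in> Lam Gc tau k e'" using g unfolding LamI_def by auto
  have P'L: "(\<lambda>z. g z ** hx z) \<in> Lam Gc tau k e'" by (rule Lam_mult[OF gL' hxL'])
  have KEL'': "KE \<in> Lam Gc tau k e'" using KEL' unfolding LamE_def by auto
  have g_gx: "gx z = g z" if "z \<in> Ccirc e'" for z using gext that unfolding IExt_def by auto
  have hI_Q': "hI z = Q z" if "z \<in> Ccirc e'" for z
    using that ie eps unfolding hI_def by (auto simp: Ccirc_def)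
  have hIL: "hI \<in> Lam Gc tau k e'"
  proof (rule Lam_cong[OF e'0 Lam_mult[OF Lam_inv[OF e'0 KEL''] P'L]])
    fix z assume "z \<in> Ccirc e'"
    then show "matrix_inv (KE z) ** (g z ** hx z) = hI z" using hI_Q' g_gx unfolding Q_def by simp
  qed
  have hIext: "IExt Gc tau k e' hI hI KIinf"
  proof -
    have KEhol: "mholo KE (Eann e)" and KEcont: "continuous_on (Eclos e) KE"
      using KE unfolding EExt_def by auto
    have hxhol: "mholo hx (Eann e)" and hxcont: "continuous_on (Eclos e) hx"
      using hext unfolding EExt_def by auto
    have gxcont: "continuous_on (cball 0 e') gx" and CGhol: "mholo (at_inf_chart gx gxinf) (ball 0 e')"
      and CGcont: "continuous_on (cball 0 e') (at_inf_chart gx gxinf)"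
      using gext unfolding IExt_def by auto
    have KIhol: "mholo KI (ball 0 e)" and KIcont: "continuous_on (cball 0 e) KI"
      and CKhol: "mholo (at_inf_chart KI KIinf) (ball 0 e)"
      and CKcont: "continuous_on (cball 0 e) (at_inf_chart KI KIinf)"
      using KI unfolding IExt_def by auto
    have invKE: "matrix_inv (KE z) = ctrans (KE (1 / cnj z))" if "z \<in> Eclos e" for z
      using KEp[OF that] by (simp add: inv_ctrans_cbar Ginv)
    define A1 where "A1 = {z::complex. e < norm z \<and> norm z < e'}"
    define R1 where "R1 = {z::complex. e \<le> norm z \<and> norm z \<le> e'}"
    have opA1: "open A1" unfolding A1_def by (rule open_annulus)
    have clR1: "closed R1" unfolding R1_def
      by (intro closed_Collect_conj closed_Collect_le continuous_intros)
    have R1E: "z \<in> Eclos e" "1 / cnj z \<in> Eclos e" "cnj z \<in> Eclos e" "1 / z \<in> Eclos e" "z \<noteq> 0"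
      "e \<le> norm z" "norm z \<le> 1/e" "e \<le> norm (1/z)" "norm (1/z) \<le> 1/e"
      if z: "z \<in> R1" for z
    proof -
      have a: "e \<le> norm z" "norm z \<le> 1/e" using z ie unfolding R1_def by auto
      note b = recip_range[OF eps(1) a]
      show "z \<in> Eclos e" "1 / cnj z \<in> Eclos e" "cnj z \<in> Eclos e" "1 / z \<in> Eclos e"
        using a b by (auto simp: Eclos_def norm_divide)
      show "z \<noteq> 0" using a eps by auto
      show "e \<le> norm z" "norm z \<le> 1/e" "e \<le> norm (1/z)" "norm (1/z) \<le> 1/e"
        using a b by (auto simp: norm_divide)
    qed
    have A1E: "z \<in> Eann e" "1 / cnj z \<in> Eann e" "cnj z \<in> Eann e" "1 / z \<in> Eann e" "z \<in> R1"
      if z: "z \<in> A1" for z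
    proof -
      have a: "e < norm z" "norm z < 1/e" using z ie unfolding A1_def by auto
      note b = recip_range_strict[OF eps(1) a]
      show "z \<in> Eann e" "1 / cnj z \<in> Eann e" "cnj z \<in> Eann e" "1 / z \<in> Eann e"
        using a b by (auto simp: Eann_def norm_divide)
      show "z \<in> R1" using z unfolding A1_def R1_def by auto
    qed
    have A1_ball: "A1 \<subseteq> ball 0 e'" unfolding A1_def by auto
    have R1_cball: "R1 \<subseteq> cball 0 e'" unfolding R1_def by auto
    have A1_Eann: "A1 \<subseteq> Eann e" using A1E by auto
    have R1_Eclos: "R1 \<subseteq> Eclos e" using R1E by auto
    have cb: "cball 0 e' = cball 0 e \<union> R1" using eps unfolding R1_def by auto
    have hI_in: "hI z = KI z" if "z \<in> cball 0 e" for z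
    proof (cases "norm z = e")
      case True then have "z \<in> Ccirc e" by (simp add: Ccirc_def)
      then show ?thesis using Q_KI True eps unfolding hI_def by auto
    next
      case False then show ?thesis using that unfolding hI_def by auto
    qed
    have hI_R1: "hI z = ctrans (KE (1 / cnj z)) ** (gx z ** hx z)" if "z \<in> R1" for z
      using R1E[OF that] invKE[of z] unfolding hI_def Q_def by auto
    have C_in: "at_inf_chart hI KIinf z = at_inf_chart KI KIinf z" if "z \<in> cball 0 e" for z
    proof (cases "z = 0")
      case True then show ?thesis by (simp add: at_inf_chart_def)
    next
      case False
      have "norm z \<le> e" using that by simp
      then have n: "1/e \<le> norm (1/z)" using inv_le2[OF eps(1), of "norm z"] False by (simp add: norm_divide)
      have "hI (1/z) = KI (1/z)"
      proof (cases "norm (1/z) = 1/e")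
        case True then have "1/z \<in> Ccirc e" by (simp add: Ccirc_def)
        then show ?thesis using Q_KI True eps ie unfolding hI_def by auto
      next
        case False then show ?thesis using n ie unfolding hI_def by auto
      qed
      then show ?thesis using \<open>z \<noteq> 0\<close> by (simp add: at_inf_chart_def)
    qed
    have C_R1: "at_inf_chart hI KIinf z = ctrans (KE (cnj z)) ** (at_inf_chart gx gxinf z ** hx (1 / z))"
      if "z \<in> R1" for z
    proof -
      have "hI (1/z) = Q (1/z)" using R1E[OF that] unfolding hI_def by auto
      moreover have "matrix_inv (KE (1/z)) = ctrans (KE (cnj z))" using invKE[OF R1E(4)[OF that]] by simp
      ultimately show ?thesis using R1E(5)[OF that] unfolding Q_def by (simp add: at_inf_chart_def)
    qed
    have c1: "continuous_on (cball 0 e') hI"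
    proof -
      have "continuous_on (cball 0 e) hI = continuous_on (cball 0 e) KI"
        by (rule continuous_on_cong) (auto simp: hI_in)
      then have "continuous_on (cball 0 e) hI" using KIcont by simp
      moreover have "continuous_on R1 hI"
      proof -
        have "continuous_on R1 (\<lambda>z. ctrans (KE (1 / cnj z)) ** (gx z ** hx z))"
        proof (rule cont_mult, rule cont_ctrans)
          have ci: "continuous_on R1 (\<lambda>z. 1 / cnj z)"
            by (intro continuous_intros) (use R1E(5) in auto)
          have "(\<lambda>z. 1 / cnj z) ` R1 \<subseteq> Eclos e" using R1E(2) by auto
          from continuous_on_compose2[OF KEcont ci this]
          show "continuous_on R1 (\<lambda>z. KE (1 / cnj z))" .
          show "continuous_on R1 (\<lambda>z. gx z ** hx z)"
            by (rule cont_mult[OF continuous_on_subset[OF gxcont R1_cball] continuous_on_subset[OF hxcont R1_Eclos]])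
        qed
        moreover have "continuous_on R1 hI = continuous_on R1 (\<lambda>z. ctrans (KE (1 / cnj z)) ** (gx z ** hx z))"
          by (rule continuous_on_cong) (auto simp: hI_R1)
        ultimately show ?thesis by simp
      qed
      ultimately show ?thesis unfolding cb by (intro continuous_on_closed_Un clR1 closed_cball)
    qed
    have c2: "continuous_on (cball 0 e') (at_inf_chart hI KIinf)"
    proof -
      have "continuous_on (cball 0 e) (at_inf_chart hI KIinf) = continuous_on (cball 0 e) (at_inf_chart KI KIinf)"
        by (rule continuous_on_cong) (auto simp: C_in)
      then have "continuous_on (cball 0 e) (at_inf_chart hI KIinf)" using CKcont by simp
      moreover have "continuous_on R1 (at_inf_chart hI KIinf)"
      proof -
        have "continuous_on R1 (\<lambda>z. ctrans (KE (cnj z)) ** (at_inf_chart gx gxinf z ** hx (1 / z)))"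
        proof (rule cont_mult, rule cont_ctrans)
          have ci: "continuous_on R1 cnj" by (intro continuous_intros)
          have "cnj ` R1 \<subseteq> Eclos e" using R1E(3) by auto
          from continuous_on_compose2[OF KEcont ci this]
          show "continuous_on R1 (\<lambda>z. KE (cnj z))" .
          have ci2: "continuous_on R1 (\<lambda>z. 1 / z)"
            by (intro continuous_intros) (use R1E(5) in auto)
          have "(\<lambda>z. 1 / z) ` R1 \<subseteq> Eclos e" using R1E(4) by auto
          from continuous_on_compose2[OF hxcont ci2 this]
          have "continuous_on R1 (\<lambda>z. hx (1 / z))" .
          then show "continuous_on R1 (\<lambda>z. at_inf_chart gx gxinf z ** hx (1 / z))"
            by (rule cont_mult[OF continuous_on_subset[OF CGcont R1_cball]])
        qed
        moreover have "continuous_on R1 (at_inf_chart hI KIinf) =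
            continuous_on R1 (\<lambda>z. ctrans (KE (cnj z)) ** (at_inf_chart gx gxinf z ** hx (1 / z)))"
          by (rule continuous_on_cong) (auto simp: C_R1)
        ultimately show ?thesis by simp
      qed
      ultimately show ?thesis unfolding cb by (intro continuous_on_closed_Un clR1 closed_cball)
    qed
    have h1: "mholo hI (ball 0 e')"
    proof (rule mglue[OF eps(1) eps(2)])
      show "mholo hI (ball 0 e)" by (rule mholo_cong[OF KIhol]) (use hI_in in auto)
      have "mholo (\<lambda>z. ctrans (KE (1 / cnj z)) ** (gx z ** hx z)) A1"
      proof (intro mholo_mult)
        show "mholo (\<lambda>z. ctrans (KE (1 / cnj z))) A1"
        proof (rule mholo_reflect[OF KEhol opA1])
          show "0 \<notin> A1" using eps unfolding A1_def by auto
        qed (rule A1E(2))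
        show "mholo gx A1" using mholo_subset[OF gx_hol_in A1_ball] .
        show "mholo hx A1" using mholo_subset[OF hxhol A1_Eann] .
      qed
      then show "mholo hI {z. e < norm z \<and> norm z < e'}"
        unfolding A1_def[symmetric] by (rule mholo_cong) (use hI_R1 A1E in auto)
      show "continuous_on (ball 0 e') hI" using continuous_on_subset[OF c1] by auto
    qed
    have h2: "mholo (at_inf_chart hI KIinf) (ball 0 e')"
    proof (rule mglue[OF eps(1) eps(2)])
      show "mholo (at_inf_chart hI KIinf) (ball 0 e)"
        by (rule mholo_cong[OF CKhol]) (simp add: C_in)
      have m1: "mholo (\<lambda>z. ctrans (KE (cnj z))) A1"
        by (rule mholo_cnj[OF KEhol opA1]) (rule A1E(3))
      have m2: "mholo (\<lambda>z. hx (1 / z)) A1"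
      proof (rule mholo_compose[OF hxhol])
        have "0 \<notin> A1" using eps unfolding A1_def by auto
        then show "(\<lambda>z. 1 / z) holomorphic_on A1" by (intro holomorphic_intros) auto
        show "(\<lambda>z. 1 / z) ` A1 \<subseteq> Eann e" using A1E(4) by auto
      qed
      have "mholo (\<lambda>z. ctrans (KE (cnj z)) ** (at_inf_chart gx gxinf z ** hx (1 / z))) A1"
        by (rule mholo_mult[OF m1 mholo_mult[OF mholo_subset[OF CGhol A1_ball] m2]])
      then show "mholo (at_inf_chart hI KIinf) {z. e < norm z \<and> norm z < e'}"
        unfolding A1_def[symmetric] by (rule mholo_cong) (simp add: C_R1 A1E(5))
      show "continuous_on (ball 0 e') (at_inf_chart hI KIinf)" using continuous_on_subset[OF c2] by auto
    qed
    have inf0: "KIinf \<in> Gc" "tau KIinf = KIinf" "cbar (KI 0) = KIinf" using iext_zero[OF KI eps(1)] by auto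
    have "hI 0 = KI 0" using eps unfolding hI_def by simp
    then show ?thesis
      using iext_intro[OF e'0 h1 c1 h2 c2 _ hIdom inf0(1,2)] inf0(3) by auto
  qed
  have hIB: "hI \<in> LamIB Gc tau k B e'"
  proof -
    have "hI 0 = KI 0" using eps unfolding hI_def by simp
    then show ?thesis using hIL hIext KIB unfolding LamIB_def by auto
  qed
  have fac': "g z ** hx z = KE z ** hI z" if z: "z \<in> Ccirc e'" for z
  proof -
    have "KE z \<in> Gc" using KEp(1) Cc'_E z by auto
    then show ?thesis using hI_Q'[OF z] g_gx[OF z] unfolding Q_def
      by (simp add: matrix_mul_assoc inv_right Ginv)
  qed
  have "\<forall>z\<in>Ccirc e'. dress Gc tau k B e' g hx z = KE z"
    using dress_char(2)[OF factorization e'0 eps(3) P'L KEL' hIB] fac' by blast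
  then show ?thesis using DE KE unfolding D_def by blast
qed

end
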